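(* Let $\sigma$ be a signature and let $\mathcal K$ be a nonempty class of causal teams over $\sigma$ (respectively, a nonempty class of generalized causal teams over $\sigma$). Then there is a $\mathcal{CO}[\sigma]$-formula $\varphi$ with $\mathcal K=\{T \text{ over } \sigma : T\models\varphi\}$ (satisfaction $\models^c$, respectively $\models^g$) if and only if $\mathcal K$ is flat and closed under equivalence.
   Context: A signature $\sigma=(\mathrm{Dom},\mathrm{Ran})$: $\mathrm{Dom}$ is a nonempty finite set of variables and each $X\in\mathrm{Dom}$ has a nonempty finite range $\mathrm{Ran}(X)$. For a sequence $\mathbf X=\langle X_1,\dots,X_n\rangle$, $\mathrm{Ran}(\mathbf X)=\mathrm{Ran}(X_1)\times\dots\times\mathrm{Ran}(X_n)$; for $\mathbf x\in\mathrm{Ran}(\mathbf X)$, $\mathbf X=\mathbf x$ abbreviates $X_1=x_1\wedge\dots\wedge X_n=x_n$; it is inconsistent if it contains conjuncts $X=x$, $X=x'$ with $x\neq x'$, consistent otherwise. $\mathcal{CO}[\sigma]$-formulas: $\alpha::=X=x\mid\neg\alpha\mid\alpha\wedge\alpha\mid\alpha\vee\alpha\mid\mathbf X=\mathbf x\;\Box\!\!\rightarrow\alpha$ (with $x\in\mathrm{Ran}(X)$, $\mathbf x\in\mathrm{Ran}(\mathbf X)$). An assignment is a map $s$ on $\mathrm{Dom}$ with $s(X)\in\mathrm{Ran}(X)$; $\mathbb A_\sigma$ is the set of assignments. A system of functions $\mathcal F$ assigns to each $V$ in a set $\mathrm{En}(\mathcal F)\subseteq\mathrm{Dom}$ a set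 $PA^{\mathcal F}_V\subseteq\mathrm{Dom}\setminus\{V\}$ and a function $\mathcal F_V:\mathrm{Ran}(PA^{\mathcal F}_V)\to\mathrm{Ran}(V)$; $\mathrm{Ex}(\mathcal F)=\mathrm{Dom}\setminus\mathrm{En}(\mathcal F)$. Only recursive systems (the graph with edges $X\to Y$ iff $X\in PA^{\mathcal F}_Y$ is acyclic) are considered; $\mathbb F_\sigma$ is the finite set of them. $s$ is compatible with $\mathcal F$ if $s(V)=\mathcal F_V(s(PA^{\mathcal F}_V))$ for all $V\in\mathrm{En}(\mathcal F)$; $\mathbb S_\sigma$ is the set of pairs $(s,\mathcal F)\in\mathbb A_\sigma\times\mathbb F_\sigma$ with $s$ compatible with $\mathcal F$. For consistent $\mathbf X=\mathbf x$: $\mathcal F_{\mathbf X=\mathbf x}$ is the restriction of $\mathcal F$ to $\mathrm{En}(\mathcal F)\setminus\mathbf X$, and $s^{\mathcal F}_{\mathbf X=\mathbf x}$ is defined recursively by $X_i\mapsto x_i$, $V\mapsto s(V)$ for $V\in\mathrm{Ex}(\mathcal F)\setminus\mathbf X$, $V\mapsto\mathcal F_V(s^{\mathcal F}_{\mathbf X=\mathbf x}(PA^{\mathcal F}_V))$ for $V\in\mathrm{En}(\mathcal F)\setminus\mathbf X$. A causal team is $T=(T^-,\mathcal F)$ with $\mathcal F\in\mathbb F_\sigma$ and $T^-\subseteq\mathbb A_\sigma$ consisting of assignments compatible with $\mathcal F$; all causal teams with empty team component are identified as the empty causal team $\emptyset$. $(S^-,\mathcal G)$ is a causal subteam of $(T^-,\mathcal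 F)$ if $S^-\subseteq T^-$ and $\mathcal G=\mathcal F$ ($\emptyset$ is a causal subteam of every causal team). $T_{\mathbf X=\mathbf x}=(\{s^{\mathcal F}_{\mathbf X=\mathbf x}:s\in T^-\},\mathcal F_{\mathbf X=\mathbf x})$. Satisfaction $\models^c$: $T\models X=x$ iff $s(X)=x$ for all $s\in T^-$; $T\models\neg\alpha$ iff $(\{s\},\mathcal F)\not\models\alpha$ for all $s\in T^-$; $\wedge$ as usual; $T\models\varphi\vee\psi$ iff there are causal subteams $T_1,T_2$ of $T$ with $T_1^-\cup T_2^-=T^-$, $T_1\models\varphi$, $T_2\models\psi$; $T\models\mathbf X=\mathbf x\;\Box\!\!\rightarrow\varphi$ iff $\mathbf X=\mathbf x$ is inconsistent or $T_{\mathbf X=\mathbf x}\models\varphi$. A generalized causal team is a set $T\subseteq\mathbb S_\sigma$; $T^-=\{s:(s,\mathcal F)\in T\text{ for some }\mathcal F\}$; causal subteams are subsets, unions are set unions; $T_{\mathbf X=\mathbf x}=\{(s^{\mathcal F}_{\mathbf X=\mathbf x},\mathcal F_{\mathbf X=\mathbf x}):(s,\mathcal F)\in T\}$. Satisfaction $\models^g$ has the same clauses except $T\models\neg\alpha$ iff $\{(s,\mathcal F)\}\not\models\alpha$ for all $(s,\mathcal F)\in T$, and $T\models\varphi\vee\psi$ iff $T=T_1\cup T_2$ with $T_1\models\varphi$, $T_2\models\psi$. Equivalence: $\mathrm{Cn}(\mathcal F)$ is the set of $V\in\mathrm{En}(\mathcal F)$ with $\mathcal F_V$ constant. $\mathcal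 F_V\sim\mathcal G_V$ means $\mathcal F_V(\mathbf x\mathbf y)=\mathcal G_V(\mathbf x\mathbf z)$ for all $\mathbf x\in\mathrm{Ran}(PA^{\mathcal F}_V\cap PA^{\mathcal G}_V)$, $\mathbf y\in\mathrm{Ran}(PA^{\mathcal F}_V\setminus PA^{\mathcal G}_V)$, $\mathbf z\in\mathrm{Ran}(PA^{\mathcal G}_V\setminus PA^{\mathcal F}_V)$. $\mathcal F\sim\mathcal G$ iff $\mathrm{En}(\mathcal F)\setminus\mathrm{Cn}(\mathcal F)=\mathrm{En}(\mathcal G)\setminus\mathrm{Cn}(\mathcal G)$ and $\mathcal F_V\sim\mathcal G_V$ for all $V$ in this set. Nonempty causal teams $(T^-,\mathcal F),(S^-,\mathcal G)$ are equivalent ($\approx$) iff $\mathcal F\sim\mathcal G$ and $T^-=S^-$. For a generalized causal team $T$, $T^{\mathcal F}=\{(s,\mathcal G)\in T:\mathcal G\sim\mathcal F\}$; generalized causal teams $S,T$ are equivalent iff $(S^{\mathcal F})^-=(T^{\mathcal F})^-$ for all $\mathcal F\in\mathbb F_\sigma$. A class $\mathcal K$ is closed under equivalence if $T\in\mathcal K$ and $T\approx S$ imply $S\in\mathcal K$. It is flat if: for causal teams, $(T^-,\mathcal F)\in\mathcal K$ iff $(\{s\},\mathcal F)\in\mathcal K$ for all $s\in T^-$; for generalized causal teams, $T\in\mathcal K$ iff $\{(s,\mathcal F)\}\in\mathcal K$ for all $(s,\mathcal F)\in T$. *)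

theory Defs
  imports Main "HOL-Library.FuncSet"
begin

record ('v, 'a) signature =
  Dom :: "'v set"
  Rng :: "'v \<Rightarrow> 'a set"

definition wf_sig :: "('v, 'a) signature \<Rightarrow> bool" where
  "wf_sig \<sigma> \<longleftrightarrow> finite (Dom \<sigma>) \<and> Dom \<sigma> \<noteq> {} \<and>
     (\<forall>X\<in>Dom \<sigma>. finite (Rng \<sigma> X) \<and> Rng \<sigma> X \<noteq> {})"

definition assignments :: "('v, 'a) signature \<Rightarrow> ('v \<Rightarrow> 'a) set" where
  "assignments \<sigma> = PiE (Dom \<sigma>) (Rng \<sigma>)"

text \<open>F_V : Ran(PA_V) \<rightarrow> Ran(V) is represented by a function on extensional
  functions with domain PA_V (canonically undefined outside Ran(PA_V)).
  Outside En the components are canonically empty/undefined.\<close>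
record ('v, 'a) sysf =
  En :: "'v set"
  PA :: "'v \<Rightarrow> 'v set"
  Fn :: "'v \<Rightarrow> ('v \<Rightarrow> 'a) \<Rightarrow> 'a"

definition graph_edges :: "('v, 'a) sysf \<Rightarrow> ('v \<times> 'v) set" where
  "graph_edges F = {(X, Y). Y \<in> En F \<and> X \<in> PA F Y}"

definition is_sys :: "('v, 'a) signature \<Rightarrow> ('v, 'a) sysf \<Rightarrow> bool" where
  "is_sys \<sigma> F \<longleftrightarrow>
     En F \<subseteq> Dom \<sigma> \<and>
     (\<forall>V\<in>En F. PA F V \<subseteq> Dom \<sigma> - {V} \<and>
        Fn F V \<in> PiE (PiE (PA F V) (Rng \<sigma>)) (\<lambda>_. Rng \<sigma> V)) \<and>
     (\<forall>V. V \<notin> En F \<longrightarrow> PA F V = {} \<and> Fn F V = (\<lambda>_. undefined)) \<and>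
     acyclic (graph_edges F)"

definition systems :: "('v, 'a) signature \<Rightarrow> ('v, 'a) sysf set" where
  "systems \<sigma> = {F. is_sys \<sigma> F}"

definition compatible :: "('v \<Rightarrow> 'a) \<Rightarrow> ('v, 'a) sysf \<Rightarrow> bool" where
  "compatible s F \<longleftrightarrow> (\<forall>V\<in>En F. s V = Fn F V (restrict s (PA F V)))"

definition empty_sys :: "('v, 'a) sysf" where
  "empty_sys = \<lparr>En = {}, PA = (\<lambda>_. {}), Fn = (\<lambda>_ _. undefined)\<rparr>"

text \<open>An intervention X = x is a list of (variable, value) pairs.\<close>
definition consistent :: "('v \<times> 'a) list \<Rightarrow> bool" where
  "consistent xs \<longleftrightarrow> (\<forall>(X, x)\<in>set xs. \<forall>(Y, y)\<in>set xs. X = Y \<longrightarrow> x = y)"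

definition ivars :: "('v \<times> 'a) list \<Rightarrow> 'v set" where
  "ivars xs = fst ` set xs"

definition restr_sys :: "('v, 'a) sysf \<Rightarrow> ('v \<times> 'a) list \<Rightarrow> ('v, 'a) sysf" where
  "restr_sys F xs =
     \<lparr>En = En F - ivars xs,
      PA = (\<lambda>V. if V \<in> En F - ivars xs then PA F V else {}),
      Fn = (\<lambda>V. if V \<in> En F - ivars xs then Fn F V else (\<lambda>_. undefined))\<rparr>"

text \<open>The intervened assignment s^F_{X=x}, defined as the unique assignment
  satisfying the recursive clauses (unique since F is recursive).\<close>
definition interv :: "('v, 'a) sysf \<Rightarrow> ('v \<times> 'a) list \<Rightarrow> ('v \<Rightarrow> 'a) \<Rightarrow> ('v \<Rightarrow> 'a)" where
  "interv F xs s = (THE t.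
      (\<forall>(X, x)\<in>set xs. t X = x) \<and>
      (\<forall>V. V \<notin> En F \<and> V \<notin> ivars xs \<longrightarrow> t V = s V) \<and>
      (\<forall>V\<in>En F. V \<notin> ivars xs \<longrightarrow> t V = Fn F V (restrict t (PA F V))))"

datatype ('v, 'a) CO =
    Eq 'v 'a
  | Neg "('v, 'a) CO"
  | Conj "('v, 'a) CO" "('v, 'a) CO"
  | Disj "('v, 'a) CO" "('v, 'a) CO"
  | Cf "('v \<times> 'a) list" "('v, 'a) CO"

fun wf_form :: "('v, 'a) signature \<Rightarrow> ('v, 'a) CO \<Rightarrow> bool" where
  "wf_form \<sigma> (Eq X x) \<longleftrightarrow> X \<in> Dom \<sigma> \<and> x \<in> Rng \<sigma> X"
| "wf_form \<sigma> (Neg a) \<longleftrightarrow> wf_form \<sigma> a"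
| "wf_form \<sigma> (Conj a b) \<longleftrightarrow> wf_form \<sigma> a \<and> wf_form \<sigma> b"
| "wf_form \<sigma> (Disj a b) \<longleftrightarrow> wf_form \<sigma> a \<and> wf_form \<sigma> b"
| "wf_form \<sigma> (Cf xs a) \<longleftrightarrow> xs \<noteq> [] \<and>
     (\<forall>(X, x)\<in>set xs. X \<in> Dom \<sigma> \<and> x \<in> Rng \<sigma> X) \<and> wf_form \<sigma> a"

type_synonym ('v, 'a) cteam = "('v \<Rightarrow> 'a) set \<times> ('v, 'a) sysf"

text \<open>All causal teams with empty team component are identified with the
  canonical empty causal team ({}, empty_sys).\<close>
definition cteams :: "('v, 'a) signature \<Rightarrow> ('v, 'a) cteam set" where
  "cteams \<sigma> = {(T, F). F \<in> systems \<sigma> \<and> T \<subseteq> assignments \<sigma> \<and>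
                 (\<forall>s\<in>T. compatible s F) \<and> (T = {} \<longrightarrow> F = empty_sys)}"

definition norm_ct :: "('v \<Rightarrow> 'a) set \<Rightarrow> ('v, 'a) sysf \<Rightarrow> ('v, 'a) cteam" where
  "norm_ct T F = (if T = {} then ({}, empty_sys) else (T, F))"

definition csubteam :: "('v, 'a) cteam \<Rightarrow> ('v, 'a) cteam \<Rightarrow> bool" where
  "csubteam S T \<longleftrightarrow> fst S \<subseteq> fst T \<and> (snd S = snd T \<or> fst S = {})"

definition cinterv :: "('v, 'a) cteam \<Rightarrow> ('v \<times> 'a) list \<Rightarrow> ('v, 'a) cteam" where
  "cinterv T xs = norm_ct (interv (snd T) xs ` fst T) (restr_sys (snd T) xs)"

fun sat_c :: "('v, 'a) cteam \<Rightarrow> ('v, 'a) CO \<Rightarrow> bool" where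
  "sat_c T (Eq X x) \<longleftrightarrow> (\<forall>s\<in>fst T. s X = x)"
| "sat_c T (Neg a) \<longleftrightarrow> (\<forall>s\<in>fst T. \<not> sat_c ({s}, snd T) a)"
| "sat_c T (Conj a b) \<longleftrightarrow> sat_c T a \<and> sat_c T b"
| "sat_c T (Disj a b) \<longleftrightarrow> (\<exists>T1 T2. csubteam T1 T \<and> csubteam T2 T \<and>
      fst T1 \<union> fst T2 = fst T \<and> sat_c T1 a \<and> sat_c T2 b)"
| "sat_c T (Cf xs a) \<longleftrightarrow> \<not> consistent xs \<or> sat_c (cinterv T xs) a"

type_synonym ('v, 'a) gteam = "(('v \<Rightarrow> 'a) \<times> ('v, 'a) sysf) set"

definition Sset :: "('v, 'a) signature \<Rightarrow> (('v \<Rightarrow> 'a) \<times> ('v, 'a) sysf) set" where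
  "Sset \<sigma> = {(s, F). s \<in> assignments \<sigma> \<and> F \<in> systems \<sigma> \<and> compatible s F}"

definition gteams :: "('v, 'a) signature \<Rightarrow> ('v, 'a) gteam set" where
  "gteams \<sigma> = Pow (Sset \<sigma>)"

definition ginterv :: "('v, 'a) gteam \<Rightarrow> ('v \<times> 'a) list \<Rightarrow> ('v, 'a) gteam" where
  "ginterv T xs = (\<lambda>(s, F). (interv F xs s, restr_sys F xs)) ` T"

fun sat_g :: "('v, 'a) gteam \<Rightarrow> ('v, 'a) CO \<Rightarrow> bool" where
  "sat_g T (Eq X x) \<longleftrightarrow> (\<forall>(s, F)\<in>T. s X = x)"
| "sat_g T (Neg a) \<longleftrightarrow> (\<forall>p\<in>T. \<not> sat_g {p} a)"
| "sat_g T (Conj a b) \<longleftrightarrow> sat_g T a \<and> sat_g T b"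
| "sat_g T (Disj a b) \<longleftrightarrow> (\<exists>T1 T2. T = T1 \<union> T2 \<and> sat_g T1 a \<and> sat_g T2 b)"
| "sat_g T (Cf xs a) \<longleftrightarrow> \<not> consistent xs \<or> sat_g (ginterv T xs) a"

definition Cn :: "('v, 'a) signature \<Rightarrow> ('v, 'a) sysf \<Rightarrow> 'v set" where
  "Cn \<sigma> F = {V\<in>En F. \<exists>c. \<forall>g\<in>PiE (PA F V) (Rng \<sigma>). Fn F V g = c}"

text \<open>F_V ~ G_V: a choice of x, y, z as in the paper is the same as a single
  assignment g to PA_F(V) \<union> PA_G(V).\<close>
definition fun_sim :: "('v, 'a) signature \<Rightarrow> ('v, 'a) sysf \<Rightarrow> ('v, 'a) sysf \<Rightarrow> 'v \<Rightarrow> bool" where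
  "fun_sim \<sigma> F G V \<longleftrightarrow>
     (\<forall>g\<in>PiE (PA F V \<union> PA G V) (Rng \<sigma>).
        Fn F V (restrict g (PA F V)) = Fn G V (restrict g (PA G V)))"

definition sys_sim :: "('v, 'a) signature \<Rightarrow> ('v, 'a) sysf \<Rightarrow> ('v, 'a) sysf \<Rightarrow> bool" where
  "sys_sim \<sigma> F G \<longleftrightarrow> En F - Cn \<sigma> F = En G - Cn \<sigma> G \<and>
     (\<forall>V\<in>En F - Cn \<sigma> F. fun_sim \<sigma> F G V)"

definition ct_equiv :: "('v, 'a) signature \<Rightarrow> ('v, 'a) cteam \<Rightarrow> ('v, 'a) cteam \<Rightarrow> bool" where
  "ct_equiv \<sigma> T S \<longleftrightarrow> fst T \<noteq> {} \<and> fst S \<noteq> {} \<and>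
     sys_sim \<sigma> (snd T) (snd S) \<and> fst T = fst S"

definition gt_restrict :: "('v, 'a) signature \<Rightarrow> ('v, 'a) gteam \<Rightarrow> ('v, 'a) sysf \<Rightarrow> ('v, 'a) gteam" where
  "gt_restrict \<sigma> T F = {(s, G)\<in>T. sys_sim \<sigma> G F}"

definition gt_equiv :: "('v, 'a) signature \<Rightarrow> ('v, 'a) gteam \<Rightarrow> ('v, 'a) gteam \<Rightarrow> bool" where
  "gt_equiv \<sigma> S T \<longleftrightarrow>
     (\<forall>F\<in>systems \<sigma>. fst ` gt_restrict \<sigma> S F = fst ` gt_restrict \<sigma> T F)"

definition closed_equiv_c :: "('v, 'a) signature \<Rightarrow> ('v, 'a) cteam set \<Rightarrow> bool" where
  "closed_equiv_c \<sigma> K \<longleftrightarrow>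
     (\<forall>T S. T \<in> K \<and> S \<in> cteams \<sigma> \<and> ct_equiv \<sigma> T S \<longrightarrow> S \<in> K)"

definition flat_c :: "('v, 'a) signature \<Rightarrow> ('v, 'a) cteam set \<Rightarrow> bool" where
  "flat_c \<sigma> K \<longleftrightarrow>
     (\<forall>T F. (T, F) \<in> cteams \<sigma> \<longrightarrow> ((T, F) \<in> K \<longleftrightarrow> (\<forall>s\<in>T. ({s}, F) \<in> K)))"

definition closed_equiv_g :: "('v, 'a) signature \<Rightarrow> ('v, 'a) gteam set \<Rightarrow> bool" where
  "closed_equiv_g \<sigma> K \<longleftrightarrow>
     (\<forall>T S. T \<in> K \<and> S \<in> gteams \<sigma> \<and> gt_equiv \<sigma> T S \<longrightarrow> S \<in> K)"

definition flat_g :: "('v, 'a) signature \<Rightarrow> ('v, 'a) gteam set \<Rightarrow> bool" where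
  "flat_g \<sigma> K \<longleftrightarrow>
     (\<forall>T\<in>gteams \<sigma>. T \<in> K \<longleftrightarrow> (\<forall>p\<in>T. {p} \<in> K))"

end

theory Submission
  imports Defs
begin

fun pt :: "('v \<Rightarrow> 'a) \<Rightarrow> ('v, 'a) sysf \<Rightarrow> ('v, 'a) CO \<Rightarrow> bool" where
  "pt s F (Eq X x) = (s X = x)"
| "pt s F (Neg a) = (\<not> pt s F a)"
| "pt s F (Conj a b) = (pt s F a \<and> pt s F b)"
| "pt s F (Disj a b) = (pt s F a \<or> pt s F b)"
| "pt s F (Cf xs a) = (\<not> consistent xs \<or> pt (interv F xs s) (restr_sys F xs) a)"

lemma sat_c_pt: "sat_c T \<phi> \<longleftrightarrow> (\<forall>s\<in>fst T. pt s (snd T) \<phi>)"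
proof (induction \<phi> arbitrary: T)
  case (Disj a b)
  show ?case
  proof
    assume "sat_c T (Disj a b)"
    then obtain T1 T2 where h: "csubteam T1 T" "csubteam T2 T" "fst T1 \<union> fst T2 = fst T"
      "sat_c T1 a" "sat_c T2 b" by auto
    show "\<forall>s\<in>fst T. pt s (snd T) (Disj a b)"
    proof
      fix s assume s: "s \<in> fst T"
      then have "s \<in> fst T1 \<or> s \<in> fst T2" using h(3) by auto
      then show "pt s (snd T) (Disj a b)"
        using h Disj.IH[of T1] Disj.IH[of T2] unfolding csubteam_def by auto
    qed
  next
    assume A: "\<forall>s\<in>fst T. pt s (snd T) (Disj a b)"
    let ?T1 = "({s\<in>fst T. pt s (snd T) a}, snd T)"
    let ?T2 = "({s\<in>fst T. pt s (snd T) b}, snd T)"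
    have "csubteam ?T1 T" "csubteam ?T2 T" "fst ?T1 \<union> fst ?T2 = fst T"
      using A by (auto simp: csubteam_def)
    moreover have "sat_c ?T1 a" "sat_c ?T2 b" using Disj.IH by auto
    ultimately show "sat_c T (Disj a b)" by (auto simp del: fst_conv snd_conv)
  qed
next
  case (Cf xs a)
  show ?case
    using Cf.IH[of "cinterv T xs"]
    by (auto simp: cinterv_def norm_ct_def)
qed auto

lemma sat_g_pt: "sat_g T \<phi> \<longleftrightarrow> (\<forall>(s,F)\<in>T. pt s F \<phi>)"
proof (induction \<phi> arbitrary: T)
  case (Disj a b)
  show ?case
  proof
    assume "sat_g T (Disj a b)"
    then show "\<forall>(s,F)\<in>T. pt s F (Disj a b)" using Disj.IH by fastforce
  next
    assume A: "\<forall>(s,F)\<in>T. pt s F (Disj a b)"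
    let ?T1 = "{(s,F)\<in>T. pt s F a}"
    let ?T2 = "{(s,F)\<in>T. pt s F b}"
    have "T = ?T1 \<union> ?T2" using A by auto
    moreover have "sat_g ?T1 a" "sat_g ?T2 b" using Disj.IH by auto
    ultimately show "sat_g T (Disj a b)" by (auto simp del: Un_iff)
  qed
next
  case (Cf xs a)
  show ?case
    using Cf.IH[of "ginterv T xs"]
    by (auto simp: ginterv_def)
qed auto

definition icond :: "('v, 'a) sysf \<Rightarrow> ('v \<times> 'a) list \<Rightarrow> ('v \<Rightarrow> 'a) \<Rightarrow> ('v \<Rightarrow> 'a) \<Rightarrow> bool" where
  "icond F xs s t \<longleftrightarrow> (\<forall>(X, x)\<in>set xs. t X = x) \<and>
      (\<forall>V. V \<notin> En F \<and> V \<notin> ivars xs \<longrightarrow> t V = s V) \<and>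
      (\<forall>V\<in>En F. V \<notin> ivars xs \<longrightarrow> t V = Fn F V (restrict t (PA F V)))"

lemma interv_icond: "interv F xs s = (THE t. icond F xs s t)"
  unfolding interv_def icond_def by simp

lemma icond_uniq:
  assumes wf: "wf (graph_edges F)" and 1: "icond F xs s t1" and 2: "icond F xs s t2"
  shows "t1 = t2"
proof
  fix V show "t1 V = t2 V"
    using wf
  proof (induction V rule: wf_induct_rule)
    case (less V)
    show ?case
    proof (cases "V \<in> ivars xs")
      case True
      then obtain x where "(V, x) \<in> set xs" unfolding ivars_def by auto
      then show ?thesis using 1 2 unfolding icond_def by auto
    next
      case False
      show ?thesis
      proof (cases "V \<in> En F")
        case True
        have "restrict t1 (PA F V) = restrict t2 (PA F V)"
          using less True by (auto simp: graph_edges_def)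
        then show ?thesis using 1 2 True False unfolding icond_def by auto
      next
        case F: False
        then show ?thesis using 1 2 False unfolding icond_def by auto
      qed
    qed
  qed
qed

lemma icond_ex:
  assumes wf: "wf (graph_edges F)" and c: "consistent xs"
  shows "\<exists>t. icond F xs s t"
proof -
  define H where "H = (\<lambda>f V. if V \<in> ivars xs then the (map_of xs V)
      else if V \<in> En F then Fn F V (restrict f (PA F V)) else s V)"
  define t where "t = wfrec (graph_edges F) H"
  have eq: "t V = H (cut t (graph_edges F) V) V" for V
    unfolding t_def by (rule wfrec[OF wf])
  have "icond F xs s t"
    unfolding icond_def
  proof (intro conjI allI ballI impI)
    fix p assume p: "p \<in> set xs"
    obtain X x where px: "p = (X, x)" by force
    have "X \<in> ivars xs" using p px unfolding ivars_def by force
    then obtain y where y: "map_of xs X = Some y"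
      unfolding ivars_def by (metis map_of_eq_None_iff not_None_eq)
    have "(X, y) \<in> set xs" using y by (rule map_of_SomeD)
    then have "y = x" using c p px unfolding consistent_def by fastforce
    then show "case p of (X, x) \<Rightarrow> t X = x"
      using px eq[of X] y \<open>X \<in> ivars xs\<close> unfolding H_def by simp
  next
    fix V assume "V \<notin> En F \<and> V \<notin> ivars xs"
    then show "t V = s V" using eq[of V] unfolding H_def by simp
  next
    fix V assume V: "V \<in> En F" "V \<notin> ivars xs"
    have "restrict (cut t (graph_edges F) V) (PA F V) = restrict t (PA F V)"
      using V by (auto simp: restrict_def cut_apply graph_edges_def)
    then show "t V = Fn F V (restrict t (PA F V))"
      using eq[of V] V unfolding H_def by simp
  qed
  then show ?thesis by blast
qed

lemma interv_props:
  assumes "wf (graph_edges F)" "consistent xs"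
  shows "icond F xs s (interv F xs s)"
proof -
  obtain t where t: "icond F xs s t" using icond_ex[OF assms] by blast
  have "\<exists>!t. icond F xs s t" using t icond_uniq[OF assms(1)] by blast
  then show ?thesis unfolding interv_icond by (rule theI')
qed

lemma interv_eq:
  assumes "wf (graph_edges F)" "icond F xs s t"
  shows "interv F xs s = t"
  unfolding interv_icond using assms icond_uniq by blast

lemma sys_props:
  assumes "F \<in> systems \<sigma>"
  shows "En F \<subseteq> Dom \<sigma>" "\<And>V. V \<in> En F \<Longrightarrow> PA F V \<subseteq> Dom \<sigma> - {V}"
    "\<And>V. V \<in> En F \<Longrightarrow> Fn F V \<in> PiE (PiE (PA F V) (Rng \<sigma>)) (\<lambda>_. Rng \<sigma> V)"
    "\<And>V. V \<notin> En F \<Longrightarrow> PA F V = {}" "\<And>V. V \<notin> En F \<Longrightarrow> Fn F V = (\<lambda>_. undefined)"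
    "acyclic (graph_edges F)"
  using assms unfolding systems_def is_sys_def by auto

lemma wf_graph:
  assumes "wf_sig \<sigma>" "F \<in> systems \<sigma>"
  shows "wf (graph_edges F)"
proof (rule finite_acyclic_wf)
  have "graph_edges F \<subseteq> Dom \<sigma> \<times> Dom \<sigma>"
    using sys_props(1,2)[OF assms(2)] unfolding graph_edges_def by blast
  moreover have "finite (Dom \<sigma>)" using assms(1) unfolding wf_sig_def by auto
  ultimately show "finite (graph_edges F)" by (meson finite_SigmaI finite_subset)
  show "acyclic (graph_edges F)" using sys_props(6)[OF assms(2)] .
qed

definition good_iv :: "('v, 'a) signature \<Rightarrow> ('v \<times> 'a) list \<Rightarrow> bool" where
  "good_iv \<sigma> xs \<longleftrightarrow> (\<forall>(X, x)\<in>set xs. X \<in> Dom \<sigma> \<and> x \<in> Rng \<sigma> X)"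

lemma icondD1: assumes "icond F xs s t" "(X, x) \<in> set xs" shows "t X = x"
proof -
  have "\<forall>(X, y)\<in>set xs. t X = y" using assms(1) unfolding icond_def by (rule conjunct1)
  then show ?thesis using assms(2) by auto
qed

lemma icondD2: "icond F xs s t \<Longrightarrow> V \<notin> En F \<Longrightarrow> V \<notin> ivars xs \<Longrightarrow> t V = s V"
  unfolding icond_def by blast

lemma icondD3: "icond F xs s t \<Longrightarrow> V \<in> En F \<Longrightarrow> V \<notin> ivars xs \<Longrightarrow> t V = Fn F V (restrict t (PA F V))"
  unfolding icond_def by blast

lemma interv_assign:
  assumes sig: "wf_sig \<sigma>" and F: "F \<in> systems \<sigma>" and s: "s \<in> assignments \<sigma>"
    and c: "consistent xs" and g: "good_iv \<sigma> xs"
  shows "interv F xs s \<in> assignments \<sigma>"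
proof -
  let ?t = "interv F xs s"
  have wf: "wf (graph_edges F)" using wf_graph[OF sig F] .
  have ic: "icond F xs s ?t" using interv_props[OF wf c] .
  note ic1 = icondD1[OF ic] and ic2 = icondD2[OF ic] and ic3 = icondD3[OF ic]
  have iv: "ivars xs \<subseteq> Dom \<sigma>" using g unfolding good_iv_def ivars_def by auto
  have out: "?t V = undefined" if "V \<notin> Dom \<sigma>" for V
  proof -
    have "V \<notin> En F" using sys_props(1)[OF F] that by auto
    moreover have "V \<notin> ivars xs" using iv that by auto
    ultimately have "?t V = s V" by (rule ic2)
    moreover have "s V = undefined" using s that unfolding assignments_def by (rule PiE_arb)
    ultimately show ?thesis by (rule trans)
  qed
  have inr: "V \<in> Dom \<sigma> \<longrightarrow> ?t V \<in> Rng \<sigma> V" for V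
    using wf
  proof (induction V rule: wf_induct_rule)
    case (less V)
    show ?case
    proof
      assume V: "V \<in> Dom \<sigma>"
      show "?t V \<in> Rng \<sigma> V"
      proof (cases "V \<in> ivars xs")
        case True
        then obtain x where x: "(V, x) \<in> set xs" unfolding ivars_def by auto
        then have "?t V = x" by (rule ic1)
        then show ?thesis using g x unfolding good_iv_def by auto
      next
        case nI: False
        show ?thesis
        proof (cases "V \<in> En F")
          case True
          have pa: "PA F V \<subseteq> Dom \<sigma> - {V}" using sys_props(2)[OF F True] .
          have "?t x \<in> Rng \<sigma> x" if "x \<in> PA F V" for x
          proof -
            have "(x, V) \<in> graph_edges F" using that True by (simp add: graph_edges_def)
            moreover have "x \<in> Dom \<sigma>" using pa that by blast
            ultimately show ?thesis using less by blast
          qed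
          then have "restrict ?t (PA F V) \<in> PiE (PA F V) (Rng \<sigma>)"
            by (simp add: restrict_PiE_iff)
          then have "Fn F V (restrict ?t (PA F V)) \<in> Rng \<sigma> V"
            by (rule PiE_mem[OF sys_props(3)[OF F True]])
          then show ?thesis by (rule ssubst[OF ic3[OF True nI]])
        next
          case False
          then have "?t V = s V" using ic2 nI by simp
          then show ?thesis using s V unfolding assignments_def by (simp add: PiE_mem)
        qed
      qed
    qed
  qed
  show ?thesis unfolding assignments_def
    by (rule PiE_I) (use inr out in auto)
qed

lemma restr_sys_sys:
  assumes F: "F \<in> systems \<sigma>"
  shows "restr_sys F xs \<in> systems \<sigma>"
proof -
  have "graph_edges (restr_sys F xs) \<subseteq> graph_edges F"
    unfolding graph_edges_def restr_sys_def by auto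
  then have "acyclic (graph_edges (restr_sys F xs))"
    using sys_props(6)[OF F] acyclic_subset by blast
  have En: "En (restr_sys F xs) = En F - ivars xs" by (simp add: restr_sys_def)
  have PA: "\<And>V. PA (restr_sys F xs) V = (if V \<in> En F - ivars xs then PA F V else {})"
    by (simp add: restr_sys_def)
  have Fn: "\<And>V. Fn (restr_sys F xs) V = (if V \<in> En F - ivars xs then Fn F V else (\<lambda>_. undefined))"
    by (simp add: restr_sys_def)
  show ?thesis
    unfolding systems_def is_sys_def mem_Collect_eq
  proof (intro conjI ballI allI impI)
    show "En (restr_sys F xs) \<subseteq> Dom \<sigma>" using sys_props(1)[OF F] En by blast
    fix V assume "V \<in> En (restr_sys F xs)"
    then have V: "V \<in> En F - ivars xs" using En by blast
    have e1: "PA (restr_sys F xs) V = PA F V" by (rule trans[OF PA if_P[OF V]])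
    have e2: "Fn (restr_sys F xs) V = Fn F V" by (rule trans[OF Fn if_P[OF V]])
    show "PA (restr_sys F xs) V \<subseteq> Dom \<sigma> - {V}" unfolding e1 using V sys_props(2)[OF F] by blast
    show "Fn (restr_sys F xs) V \<in> PiE (PiE (PA (restr_sys F xs) V) (Rng \<sigma>)) (\<lambda>_. Rng \<sigma> V)"
      unfolding e1 e2 using V sys_props(3)[OF F] by blast
  next
    fix V assume "V \<notin> En (restr_sys F xs)"
    then have V: "V \<notin> En F - ivars xs" using En by blast
    show "PA (restr_sys F xs) V = {}" by (rule trans[OF PA if_not_P[OF V]])
    show "Fn (restr_sys F xs) V = (\<lambda>_. undefined)" by (rule trans[OF Fn if_not_P[OF V]])
  qed fact
qed

lemma interv_compat:
  assumes sig: "wf_sig \<sigma>" and F: "F \<in> systems \<sigma>" and c: "consistent xs"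
  shows "compatible (interv F xs s) (restr_sys F xs)"
  unfolding compatible_def
proof
  fix V assume "V \<in> En (restr_sys F xs)"
  then have V: "V \<in> En F" "V \<notin> ivars xs" by (auto simp: restr_sys_def)
  then have e: "PA (restr_sys F xs) V = PA F V" "Fn (restr_sys F xs) V = Fn F V"
    by (auto simp: restr_sys_def)
  show "interv F xs s V = Fn (restr_sys F xs) V (restrict (interv F xs s) (PA (restr_sys F xs) V))"
    unfolding e by (rule icondD3[OF interv_props[OF wf_graph[OF sig F] c] V])
qed

lemma Cn_restr: "Cn \<sigma> (restr_sys F xs) = Cn \<sigma> F - ivars xs"
  unfolding Cn_def restr_sys_def by auto

lemma sim_restr:
  assumes "sys_sim \<sigma> F G"
  shows "sys_sim \<sigma> (restr_sys F xs) (restr_sys G xs)"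
proof -
  have e: "En (restr_sys F xs) - Cn \<sigma> (restr_sys F xs) = (En F - Cn \<sigma> F) - ivars xs" for F
    unfolding Cn_restr by (auto simp: restr_sys_def)
  have f: "fun_sim \<sigma> (restr_sys F xs) (restr_sys G xs) V = fun_sim \<sigma> F G V"
    if "V \<in> En F" "V \<in> En G" "V \<notin> ivars xs" for V
    using that unfolding fun_sim_def restr_sys_def by simp
  show ?thesis unfolding sys_sim_def e
  proof (intro conjI ballI)
    show "En F - Cn \<sigma> F - ivars xs = En G - Cn \<sigma> G - ivars xs"
      using assms by (simp add: sys_sim_def)
    fix V assume V: "V \<in> En F - Cn \<sigma> F - ivars xs"
    then have "V \<in> En G" using assms unfolding sys_sim_def by auto
    then show "fun_sim \<sigma> (restr_sys F xs) (restr_sys G xs) V"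
      using f[of V] V assms unfolding sys_sim_def by auto
  qed
qed

lemma PiE_extend:
  assumes sig: "wf_sig \<sigma>" and g: "g \<in> PiE A (Rng \<sigma>)" and AB: "A \<subseteq> B" and B: "B \<subseteq> Dom \<sigma>"
  shows "\<exists>w\<in>PiE B (Rng \<sigma>). restrict w A = g"
proof -
  define w where "w = (\<lambda>x. if x \<in> A then g x else if x \<in> B then (SOME y. y \<in> Rng \<sigma> x) else undefined)"
  have ne: "(SOME y. y \<in> Rng \<sigma> x) \<in> Rng \<sigma> x" if "x \<in> Dom \<sigma>" for x
  proof -
    have "Rng \<sigma> x \<noteq> {}" using sig that unfolding wf_sig_def by blast
    then show ?thesis by (simp add: some_in_eq)
  qed
  have "w \<in> PiE B (Rng \<sigma>)"
  proof (rule PiE_I)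
    fix x assume x: "x \<in> B"
    show "w x \<in> Rng \<sigma> x"
    proof (cases "x \<in> A")
      case True
      then show ?thesis unfolding w_def using PiE_mem[OF g True] by simp
    next
      case False
      then show ?thesis unfolding w_def using ne[of x] x B by auto
    qed
  next
    fix x assume "x \<notin> B"
    then show "w x = undefined" unfolding w_def using AB by auto
  qed
  moreover have "restrict w A = g"
  proof
    fix x show "restrict w A x = g x"
      using PiE_arb[OF g, of x] unfolding w_def by (cases "x \<in> A") auto
  qed
  ultimately show ?thesis by blast
qed

lemma restrict_PiE_sub: "t \<in> PiE D R \<Longrightarrow> A \<subseteq> D \<Longrightarrow> restrict t A \<in> PiE A R"
  by (auto simp: PiE_def)

lemma rr: "A \<subseteq> B \<Longrightarrow> restrict (restrict w B) A = restrict w A"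
  by (rule ext) (auto simp: restrict_def)

lemma sim_refl: "sys_sim \<sigma> F F"
  unfolding sys_sim_def fun_sim_def by auto

lemma sim_sym: "sys_sim \<sigma> F G \<Longrightarrow> sys_sim \<sigma> G F"
  unfolding sys_sim_def fun_sim_def by (auto simp: Un_commute)

lemma sim_trans:
  assumes sig: "wf_sig \<sigma>" and F: "F \<in> systems \<sigma>" and G: "G \<in> systems \<sigma>" and H: "H \<in> systems \<sigma>"
    and 1: "sys_sim \<sigma> F G" and 2: "sys_sim \<sigma> G H"
  shows "sys_sim \<sigma> F H"
  unfolding sys_sim_def
proof (intro conjI ballI)
  show "En F - Cn \<sigma> F = En H - Cn \<sigma> H" using 1 2 unfolding sys_sim_def by auto
  fix V assume V: "V \<in> En F - Cn \<sigma> F"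
  have VG: "V \<in> En G" and VH: "V \<in> En H" using V 1 2 unfolding sys_sim_def by auto
  have f1: "fun_sim \<sigma> F G V" and f2: "fun_sim \<sigma> G H V" using V 1 2 unfolding sys_sim_def by auto
  show "fun_sim \<sigma> F H V"
    unfolding fun_sim_def
  proof
    fix g assume g: "g \<in> PiE (PA F V \<union> PA H V) (Rng \<sigma>)"
    have "PA F V \<union> PA H V \<union> PA G V \<subseteq> Dom \<sigma>"
      using sys_props(2)[OF F] sys_props(2)[OF G VG] sys_props(2)[OF H VH] V by blast
    then obtain w where w: "w \<in> PiE (PA F V \<union> PA H V \<union> PA G V) (Rng \<sigma>)"
      "restrict w (PA F V \<union> PA H V) = g"
      using PiE_extend[OF sig g] by blast
    have a: "restrict w (PA F V \<union> PA G V) \<in> PiE (PA F V \<union> PA G V) (Rng \<sigma>)"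
      using w(1) by (auto simp: PiE_def)
    have b: "restrict w (PA G V \<union> PA H V) \<in> PiE (PA G V \<union> PA H V) (Rng \<sigma>)"
      using w(1) by (auto simp: PiE_def)
    have "Fn F V (restrict w (PA F V)) = Fn G V (restrict w (PA G V))"
      using f1[unfolded fun_sim_def, rule_format, OF a] by (simp add: rr)
    also have "\<dots> = Fn H V (restrict w (PA H V))"
      using f2[unfolded fun_sim_def, rule_format, OF b] by (simp add: rr)
    finally have eqw: "Fn F V (restrict w (PA F V)) = Fn H V (restrict w (PA H V))" .
    show "Fn F V (restrict g (PA F V)) = Fn H V (restrict g (PA H V))"
    proof -
      have "restrict g (PA F V) = restrict w (PA F V)"
        using w(2) rr[of "PA F V" "PA F V \<union> PA H V" w] by auto
      moreover have "restrict g (PA H V) = restrict w (PA H V)"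
        using w(2) rr[of "PA H V" "PA F V \<union> PA H V" w] by auto
      ultimately show ?thesis using eqw by simp
    qed
  qed
qed

lemma assign_restrict:
  assumes "u \<in> assignments \<sigma>" "F \<in> systems \<sigma>" "V \<in> En F"
  shows "restrict u (PA F V) \<in> PiE (PA F V) (Rng \<sigma>)"
proof -
  have "PA F V \<subseteq> Dom \<sigma>" using sys_props(2)[OF assms(2,3)] by blast
  then show ?thesis using assms(1) unfolding assignments_def by (rule restrict_PiE_sub[rotated])
qed

lemma cn_eq:
  assumes "V \<in> Cn \<sigma> F" "F \<in> systems \<sigma>" "u \<in> assignments \<sigma>" "u' \<in> assignments \<sigma>"
  shows "Fn F V (restrict u (PA F V)) = Fn F V (restrict u' (PA F V))"
proof -
  have V: "V \<in> En F" using assms(1) unfolding Cn_def by blast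
  obtain c where c: "\<forall>g\<in>PiE (PA F V) (Rng \<sigma>). Fn F V g = c" using assms(1) unfolding Cn_def by blast
  show ?thesis using c assign_restrict[OF assms(3,2) V] assign_restrict[OF assms(4,2) V] by simp
qed

lemma compatD: "compatible t F \<Longrightarrow> V \<in> En F \<Longrightarrow> t V = Fn F V (restrict t (PA F V))"
  unfolding compatible_def by blast

lemma pt_sim:
  assumes sig: "wf_sig \<sigma>"
  shows "F \<in> systems \<sigma> \<Longrightarrow> G \<in> systems \<sigma> \<Longrightarrow> t \<in> assignments \<sigma> \<Longrightarrow> compatible t F \<Longrightarrow>
    compatible t G \<Longrightarrow> sys_sim \<sigma> F G \<Longrightarrow> wf_form \<sigma> \<phi> \<Longrightarrow> pt t F \<phi> = pt t G \<phi>"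
proof (induction \<phi> arbitrary: t F G)
  case (Cf xs a)
  note F = Cf.prems(1) and G = Cf.prems(2) and t = Cf.prems(3) and cF = Cf.prems(4)
    and cG = Cf.prems(5) and sim = Cf.prems(6)
  show ?case
  proof (cases "consistent xs")
    case False
    then show ?thesis by simp
  next
    case c: True
    have g: "good_iv \<sigma> xs" using Cf.prems(7) unfolding good_iv_def by auto
    have wa: "wf_form \<sigma> a" using Cf.prems(7) by simp
    define t1 where "t1 = interv F xs t"
    have icF: "icond F xs t t1" unfolding t1_def by (rule interv_props[OF wf_graph[OF sig F] c])
    have t1: "t1 \<in> assignments \<sigma>" unfolding t1_def by (rule interv_assign[OF sig F t c g])
    have eqs: "En F - Cn \<sigma> F = En G - Cn \<sigma> G" using sim unfolding sys_sim_def by blast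
    have cnF: "t1 V = t V" if "V \<in> Cn \<sigma> F" "V \<notin> ivars xs" for V
    proof -
      have V: "V \<in> En F" using that unfolding Cn_def by blast
      have "t1 V = Fn F V (restrict t1 (PA F V))" by (rule icondD3[OF icF V that(2)])
      also have "\<dots> = Fn F V (restrict t (PA F V))" by (rule cn_eq[OF that(1) F t1 t])
      also have "\<dots> = t V" by (rule compatD[OF cF V, symmetric])
      finally show ?thesis .
    qed
    have "icond G xs t t1"
      unfolding icond_def
    proof (intro conjI allI ballI impI)
      fix p assume "p \<in> set xs"
      then show "case p of (X, x) \<Rightarrow> t1 X = x" using icondD1[OF icF] by (cases p) auto
    next
      fix V assume V: "V \<notin> En G \<and> V \<notin> ivars xs"
      show "t1 V = t V"
      proof (cases "V \<in> En F")
        case False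
        then show ?thesis using icondD2[OF icF] V by blast
      next
        case True
        then have "V \<in> Cn \<sigma> F" using eqs V by blast
        then show ?thesis using cnF V by blast
      qed
    next
      fix V assume VG: "V \<in> En G" and nI: "V \<notin> ivars xs"
      show "t1 V = Fn G V (restrict t1 (PA G V))"
      proof (cases "V \<in> Cn \<sigma> G")
        case True
        have "Fn G V (restrict t1 (PA G V)) = Fn G V (restrict t (PA G V))"
          by (rule cn_eq[OF True G t1 t])
        also have "\<dots> = t V" by (rule compatD[OF cG VG, symmetric])
        finally have r: "Fn G V (restrict t1 (PA G V)) = t V" .
        have "t1 V = t V"
        proof (cases "V \<in> En F")
          case False
          then show ?thesis using icondD2[OF icF] nI by blast
        next
          case True
          then have "V \<in> Cn \<sigma> F" using eqs VG \<open>V \<in> Cn \<sigma> G\<close> by blast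
          then show ?thesis using cnF nI by blast
        qed
        then show ?thesis using r by simp
      next
        case False
        then have VF: "V \<in> En F - Cn \<sigma> F" using eqs VG by blast
        have fs: "fun_sim \<sigma> F G V" using sim VF unfolding sys_sim_def by blast
        have "PA F V \<union> PA G V \<subseteq> Dom \<sigma>" using sys_props(2)[OF F] sys_props(2)[OF G VG] VF by blast
        then have rg: "restrict t1 (PA F V \<union> PA G V) \<in> PiE (PA F V \<union> PA G V) (Rng \<sigma>)"
          using t1 unfolding assignments_def by (rule restrict_PiE_sub[rotated])
        have "t1 V = Fn F V (restrict t1 (PA F V))" using icondD3[OF icF _ nI] VF by blast
        also have "\<dots> = Fn G V (restrict t1 (PA G V))"
          using fs[unfolded fun_sim_def, rule_format, OF rg] by (simp add: rr)
        finally show ?thesis .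
      qed
    qed
    then have t1G: "interv G xs t = t1" by (rule interv_eq[OF wf_graph[OF sig G]])
    have "pt t1 (restr_sys F xs) a = pt t1 (restr_sys G xs) a"
    proof (rule Cf.IH)
      show "restr_sys F xs \<in> systems \<sigma>" "restr_sys G xs \<in> systems \<sigma>"
        using restr_sys_sys F G by blast+
      show "t1 \<in> assignments \<sigma>" by (rule t1)
      show "compatible t1 (restr_sys F xs)" unfolding t1_def by (rule interv_compat[OF sig F c])
      show "compatible t1 (restr_sys G xs)" unfolding t1G[symmetric] by (rule interv_compat[OF sig G c])
      show "sys_sim \<sigma> (restr_sys F xs) (restr_sys G xs)" by (rule sim_restr[OF sim])
      show "wf_form \<sigma> a" by (rule wa)
    qed
    then show ?thesis using t1G unfolding t1_def by simp
  qed
qed auto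

definition enumL :: "'b set \<Rightarrow> 'b list" where "enumL A = (SOME xs. set xs = A)"

lemma set_enum: "finite A \<Longrightarrow> set (enumL A) = A"
  unfolding enumL_def using finite_list by (metis (mono_tags) someI_ex)

fun bconj :: "('v, 'a) CO \<Rightarrow> ('v, 'a) CO list \<Rightarrow> ('v, 'a) CO" where
  "bconj b [] = Neg b"
| "bconj b (a # l) = Conj a (bconj b l)"

fun bdisj :: "('v, 'a) CO \<Rightarrow> ('v, 'a) CO list \<Rightarrow> ('v, 'a) CO" where
  "bdisj b [] = b"
| "bdisj b (a # l) = Disj a (bdisj b l)"

lemma pt_bconj: "\<not> pt t G b \<Longrightarrow> pt t G (bconj b l) \<longleftrightarrow> (\<forall>a\<in>set l. pt t G a)"
  by (induction l) auto

lemma pt_bdisj: "\<not> pt t G b \<Longrightarrow> pt t G (bdisj b l) \<longleftrightarrow> (\<exists>a\<in>set l. pt t G a)"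
  by (induction l) auto

lemma wf_bconj: "wf_form \<sigma> b \<Longrightarrow> \<forall>a\<in>set l. wf_form \<sigma> a \<Longrightarrow> wf_form \<sigma> (bconj b l)"
  by (induction l) auto

lemma wf_bdisj: "wf_form \<sigma> b \<Longrightarrow> \<forall>a\<in>set l. wf_form \<sigma> a \<Longrightarrow> wf_form \<sigma> (bdisj b l)"
  by (induction l) auto

definition X0 :: "('v, 'a) signature \<Rightarrow> 'v" where "X0 \<sigma> = (SOME X. X \<in> Dom \<sigma>)"
definition x0 :: "('v, 'a) signature \<Rightarrow> 'a" where "x0 \<sigma> = (SOME x. x \<in> Rng \<sigma> (X0 \<sigma>))"
definition botf :: "('v, 'a) signature \<Rightarrow> ('v, 'a) CO" where
  "botf \<sigma> = Conj (Eq (X0 \<sigma>) (x0 \<sigma>)) (Neg (Eq (X0 \<sigma>) (x0 \<sigma>)))"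

lemma pt_bot: "\<not> pt t G (botf \<sigma>)" unfolding botf_def by simp

lemma wf_bot: assumes "wf_sig \<sigma>" shows "wf_form \<sigma> (botf \<sigma>)"
proof -
  have "Dom \<sigma> \<noteq> {}" using assms unfolding wf_sig_def by blast
  then have X: "X0 \<sigma> \<in> Dom \<sigma>" unfolding X0_def by (simp add: some_in_eq)
  then have "Rng \<sigma> (X0 \<sigma>) \<noteq> {}" using assms unfolding wf_sig_def by blast
  then have "x0 \<sigma> \<in> Rng \<sigma> (X0 \<sigma>)" unfolding x0_def by (simp add: some_in_eq)
  then show ?thesis using X unfolding botf_def by simp
qed

definition cf :: "('v \<times> 'a) list \<Rightarrow> ('v, 'a) CO \<Rightarrow> ('v, 'a) CO" where
  "cf xs a = (if xs = [] then a else Cf xs a)"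

definition wl :: "('v, 'a) signature \<Rightarrow> 'v \<Rightarrow> ('v \<Rightarrow> 'a) \<Rightarrow> ('v \<times> 'a) list" where
  "wl \<sigma> V w = map (\<lambda>X. (X, w X)) (enumL (Dom \<sigma> - {V}))"

definition W :: "('v, 'a) signature \<Rightarrow> 'v \<Rightarrow> ('v \<Rightarrow> 'a) set" where
  "W \<sigma> V = PiE (Dom \<sigma> - {V}) (Rng \<sigma>)"

definition val :: "('v, 'a) sysf \<Rightarrow> ('v \<Rightarrow> 'a) \<Rightarrow> 'v \<Rightarrow> ('v \<Rightarrow> 'a) \<Rightarrow> 'a" where
  "val G t V w = (if V \<in> En G then Fn G V (restrict w (PA G V)) else t V)"

lemma finDom: "wf_sig \<sigma> \<Longrightarrow> finite (Dom \<sigma>)" unfolding wf_sig_def by blast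

lemma set_wl: "wf_sig \<sigma> \<Longrightarrow> set (wl \<sigma> V w) = (\<lambda>X. (X, w X)) ` (Dom \<sigma> - {V})"
  unfolding wl_def using set_enum[of "Dom \<sigma> - {V}"] finDom by auto

lemma val_lemma:
  assumes sig: "wf_sig \<sigma>" and G: "G \<in> systems \<sigma>" and t: "t \<in> assignments \<sigma>"
    and cG: "compatible t G" and V: "V \<in> Dom \<sigma>" and w: "w \<in> W \<sigma> V"
  shows "pt t G (cf (wl \<sigma> V w) (Eq V v)) \<longleftrightarrow> val G t V w = v"
proof (cases "wl \<sigma> V w = []")
  case True
  then have D: "Dom \<sigma> - {V} = {}" using set_wl[OF sig, of V w] by auto
  have "t V = val G t V w"
  proof (cases "V \<in> En G")
    case True
    have "PA G V = {}" using sys_props(2)[OF G True] D by blast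
    then have "restrict w (PA G V) = restrict t (PA G V)" by (simp add: restrict_def)
    then show ?thesis using compatD[OF cG True] True unfolding val_def by simp
  next
    case False
    then show ?thesis unfolding val_def by simp
  qed
  then show ?thesis using True unfolding cf_def by simp
next
  case False
  let ?xs = "wl \<sigma> V w"
  have sx: "set ?xs = (\<lambda>X. (X, w X)) ` (Dom \<sigma> - {V})" by (rule set_wl[OF sig])
  have c: "consistent ?xs" unfolding consistent_def sx by auto
  have iv: "ivars ?xs = Dom \<sigma> - {V}" unfolding ivars_def sx by force
  define t1 where "t1 = interv G ?xs t"
  have ic: "icond G ?xs t t1" unfolding t1_def by (rule interv_props[OF wf_graph[OF sig G] c])
  have nI: "V \<notin> ivars ?xs" using iv by blast
  have "t1 V = val G t V w"
  proof (cases "V \<in> En G")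
    case True
    have "restrict t1 (PA G V) = restrict w (PA G V)"
    proof
      fix X show "restrict t1 (PA G V) X = restrict w (PA G V) X"
      proof (cases "X \<in> PA G V")
        case True
        then have "(X, w X) \<in> set ?xs" using sys_props(2)[OF G \<open>V \<in> En G\<close>] sx by blast
        then have "t1 X = w X" by (rule icondD1[OF ic])
        then show ?thesis using True by simp
      qed simp
    qed
    then show ?thesis using icondD3[OF ic True nI] True unfolding val_def by simp
  next
    case False
    then show ?thesis using icondD2[OF ic False nI] unfolding val_def by simp
  qed
  then show ?thesis using False c unfolding cf_def t1_def by simp
qed

lemma wf_cf:
  assumes sig: "wf_sig \<sigma>" and w: "w \<in> W \<sigma> V" and a: "wf_form \<sigma> a"
  shows "wf_form \<sigma> (cf (wl \<sigma> V w) a)"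
proof -
  have "\<forall>(X, x)\<in>set (wl \<sigma> V w). X \<in> Dom \<sigma> \<and> x \<in> Rng \<sigma> X"
    using w unfolding set_wl[OF sig] W_def by auto
  then show ?thesis using a unfolding cf_def by simp
qed

definition eta :: "('v, 'a) signature \<Rightarrow> ('v, 'a) sysf \<Rightarrow> 'v \<Rightarrow> ('v, 'a) CO" where
  "eta \<sigma> F V = bconj (botf \<sigma>) (map (\<lambda>w. cf (wl \<sigma> V w) (Eq V (Fn F V (restrict w (PA F V))))) (enumL (W \<sigma> V)))"

definition xi :: "('v, 'a) signature \<Rightarrow> 'v \<Rightarrow> ('v, 'a) CO" where
  "xi \<sigma> V = bdisj (botf \<sigma>) (map (\<lambda>v. Conj (Eq V v) (bconj (botf \<sigma>) (map (\<lambda>w. cf (wl \<sigma> V w) (Eq V v)) (enumL (W \<sigma> V))))) (enumL (Rng \<sigma> V)))"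

definition chi :: "('v, 'a) signature \<Rightarrow> ('v \<Rightarrow> 'a) \<Rightarrow> ('v, 'a) sysf \<Rightarrow> ('v, 'a) CO" where
  "chi \<sigma> s F = Conj (bconj (botf \<sigma>) (map (\<lambda>X. Eq X (s X)) (enumL (Dom \<sigma>))))
     (Conj (bconj (botf \<sigma>) (map (eta \<sigma> F) (enumL (En F - Cn \<sigma> F))))
           (bconj (botf \<sigma>) (map (xi \<sigma>) (enumL (Dom \<sigma> - (En F - Cn \<sigma> F))))))"

lemma finRng: "wf_sig \<sigma> \<Longrightarrow> V \<in> Dom \<sigma> \<Longrightarrow> finite (Rng \<sigma> V)" unfolding wf_sig_def by blast

lemma finW: "wf_sig \<sigma> \<Longrightarrow> finite (W \<sigma> V)"
  unfolding W_def by (rule finite_PiE) (auto simp: finDom finRng)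

lemma finEC: "wf_sig \<sigma> \<Longrightarrow> F \<in> systems \<sigma> \<Longrightarrow> finite (En F - Cn \<sigma> F)"
  using sys_props(1) finDom by (metis finite_Diff finite_subset)

lemma pt_bconj_bot[simp]: "pt t G (bconj (botf \<sigma>) l) \<longleftrightarrow> (\<forall>a\<in>set l. pt t G a)"
  by (rule pt_bconj[OF pt_bot])

lemma pt_bdisj_bot[simp]: "pt t G (bdisj (botf \<sigma>) l) \<longleftrightarrow> (\<exists>a\<in>set l. pt t G a)"
  by (rule pt_bdisj[OF pt_bot])

lemma pt_eta:
  assumes sig: "wf_sig \<sigma>" and G: "G \<in> systems \<sigma>" and t: "t \<in> assignments \<sigma>"
    and cG: "compatible t G" and V: "V \<in> Dom \<sigma>"
  shows "pt t G (eta \<sigma> F V) \<longleftrightarrow> (\<forall>w\<in>W \<sigma> V. val G t V w = Fn F V (restrict w (PA F V)))"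
  unfolding eta_def pt_bconj[OF pt_bot] set_map set_enum[OF finW[OF sig]]
  using val_lemma[OF sig G t cG V] by auto

lemma pt_xi:
  assumes sig: "wf_sig \<sigma>" and G: "G \<in> systems \<sigma>" and t: "t \<in> assignments \<sigma>"
    and cG: "compatible t G" and V: "V \<in> Dom \<sigma>"
  shows "pt t G (xi \<sigma> V) \<longleftrightarrow> (\<exists>v\<in>Rng \<sigma> V. t V = v \<and> (\<forall>w\<in>W \<sigma> V. val G t V w = v))"
  using val_lemma[OF sig G t cG V]
  by (auto simp: xi_def set_enum[OF finRng[OF sig V]] set_enum[OF finW[OF sig]])

lemma W_restrict: "w \<in> W \<sigma> V \<Longrightarrow> A \<subseteq> Dom \<sigma> - {V} \<Longrightarrow> restrict w A \<in> PiE A (Rng \<sigma>)"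
  unfolding W_def by (rule restrict_PiE_sub)

lemma W_extend: "wf_sig \<sigma> \<Longrightarrow> g \<in> PiE A (Rng \<sigma>) \<Longrightarrow> A \<subseteq> Dom \<sigma> - {V} \<Longrightarrow> \<exists>w\<in>W \<sigma> V. restrict w A = g"
  unfolding W_def by (rule PiE_extend) auto

lemma Cn_I: "V \<in> En F \<Longrightarrow> \<forall>g\<in>PiE (PA F V) (Rng \<sigma>). Fn F V g = c \<Longrightarrow> V \<in> Cn \<sigma> F"
  unfolding Cn_def by blast

lemma Cn_const: "V \<in> Cn \<sigma> F \<Longrightarrow> g \<in> PiE (PA F V) (Rng \<sigma>) \<Longrightarrow> g' \<in> PiE (PA F V) (Rng \<sigma>) \<Longrightarrow> Fn F V g = Fn F V g'"
  unfolding Cn_def by auto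

lemma chi_lemma:
  assumes sig: "wf_sig \<sigma>" and G: "G \<in> systems \<sigma>" and t: "t \<in> assignments \<sigma>"
    and cG: "compatible t G" and s: "s \<in> assignments \<sigma>" and F: "F \<in> systems \<sigma>"
  shows "pt t G (chi \<sigma> s F) \<longleftrightarrow> t = s \<and> sys_sim \<sigma> G F"
proof -
  have ECF: "En F - Cn \<sigma> F \<subseteq> Dom \<sigma>" using sys_props(1)[OF F] by blast
  have ECG: "En G - Cn \<sigma> G \<subseteq> Dom \<sigma>" using sys_props(1)[OF G] by blast
  have p1: "pt t G (bconj (botf \<sigma>) (map (\<lambda>X. Eq X (s X)) (enumL (Dom \<sigma>)))) \<longleftrightarrow> (\<forall>X\<in>Dom \<sigma>. t X = s X)"
    by (simp add: set_enum[OF finDom[OF sig]])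
  have p2: "pt t G (bconj (botf \<sigma>) (map (eta \<sigma> F) (enumL (En F - Cn \<sigma> F)))) \<longleftrightarrow>
     (\<forall>V\<in>En F - Cn \<sigma> F. \<forall>w\<in>W \<sigma> V. val G t V w = Fn F V (restrict w (PA F V)))"
  proof -
    have "pt t G (bconj (botf \<sigma>) (map (eta \<sigma> F) (enumL (En F - Cn \<sigma> F)))) \<longleftrightarrow>
      (\<forall>V\<in>En F - Cn \<sigma> F. pt t G (eta \<sigma> F V))"
      by (simp add: set_enum[OF finEC[OF sig F]])
    also have "\<dots> \<longleftrightarrow> (\<forall>V\<in>En F - Cn \<sigma> F. \<forall>w\<in>W \<sigma> V. val G t V w = Fn F V (restrict w (PA F V)))"
      using pt_eta[OF sig G t cG] ECF by blast
    finally show ?thesis .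
  qed
  have p3: "pt t G (bconj (botf \<sigma>) (map (xi \<sigma>) (enumL (Dom \<sigma> - (En F - Cn \<sigma> F))))) \<longleftrightarrow>
     (\<forall>V\<in>Dom \<sigma> - (En F - Cn \<sigma> F). \<exists>v\<in>Rng \<sigma> V. t V = v \<and> (\<forall>w\<in>W \<sigma> V. val G t V w = v))"
  proof -
    have "pt t G (bconj (botf \<sigma>) (map (xi \<sigma>) (enumL (Dom \<sigma> - (En F - Cn \<sigma> F))))) \<longleftrightarrow>
      (\<forall>V\<in>Dom \<sigma> - (En F - Cn \<sigma> F). pt t G (xi \<sigma> V))"
      by (simp add: set_enum[OF finite_Diff[OF finDom[OF sig]]])
    also have "\<dots> \<longleftrightarrow> (\<forall>V\<in>Dom \<sigma> - (En F - Cn \<sigma> F). \<exists>v\<in>Rng \<sigma> V. t V = v \<and> (\<forall>w\<in>W \<sigma> V. val G t V w = v))"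
      using pt_xi[OF sig G t cG] by blast
    finally show ?thesis .
  qed
  have "pt t G (chi \<sigma> s F) \<longleftrightarrow> (\<forall>X\<in>Dom \<sigma>. t X = s X) \<and>
     (\<forall>V\<in>En F - Cn \<sigma> F. \<forall>w\<in>W \<sigma> V. val G t V w = Fn F V (restrict w (PA F V))) \<and>
     (\<forall>V\<in>Dom \<sigma> - (En F - Cn \<sigma> F). \<exists>v\<in>Rng \<sigma> V. t V = v \<and> (\<forall>w\<in>W \<sigma> V. val G t V w = v))"
    unfolding chi_def pt.simps p1 p2 p3 ..
  also have "\<dots> \<longleftrightarrow> t = s \<and> sys_sim \<sigma> G F"
  proof
    assume A: "(\<forall>X\<in>Dom \<sigma>. t X = s X) \<and>
     (\<forall>V\<in>En F - Cn \<sigma> F. \<forall>w\<in>W \<sigma> V. val G t V w = Fn F V (restrict w (PA F V))) \<and>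
     (\<forall>V\<in>Dom \<sigma> - (En F - Cn \<sigma> F). \<exists>v\<in>Rng \<sigma> V. t V = v \<and> (\<forall>w\<in>W \<sigma> V. val G t V w = v))"
    have ts: "t = s" using A t s unfolding assignments_def by (intro PiE_ext) auto
    have E2: "\<And>V w. V \<in> En F - Cn \<sigma> F \<Longrightarrow> w \<in> W \<sigma> V \<Longrightarrow> val G t V w = Fn F V (restrict w (PA F V))"
      using A by blast
    have E3: "\<And>V. V \<in> Dom \<sigma> - (En F - Cn \<sigma> F) \<Longrightarrow> \<exists>v. \<forall>w\<in>W \<sigma> V. val G t V w = v"
      using A by blast
    have sub1: "En F - Cn \<sigma> F \<subseteq> En G - Cn \<sigma> G"
    proof
      fix V assume VF: "V \<in> En F - Cn \<sigma> F"
      show "V \<in> En G - Cn \<sigma> G"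
      proof (rule ccontr)
        assume nG: "V \<notin> En G - Cn \<sigma> G"
        have "\<exists>c. \<forall>w\<in>W \<sigma> V. val G t V w = c"
        proof (cases "V \<in> En G")
          case False
          then show ?thesis unfolding val_def by auto
        next
          case True
          then have cn: "V \<in> Cn \<sigma> G" using nG by blast
          have pa: "PA G V \<subseteq> Dom \<sigma> - {V}" using sys_props(2)[OF G True] .
          obtain c where c: "\<forall>g\<in>PiE (PA G V) (Rng \<sigma>). Fn G V g = c" using cn unfolding Cn_def by blast
          show ?thesis using True c W_restrict[OF _ pa] unfolding val_def by auto
        qed
        then obtain c where c: "\<forall>w\<in>W \<sigma> V. val G t V w = c" by blast
        have paF: "PA F V \<subseteq> Dom \<sigma> - {V}" using sys_props(2)[OF F] VF by blast
        have "\<forall>g\<in>PiE (PA F V) (Rng \<sigma>). Fn F V g = c"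
        proof
          fix g assume "g \<in> PiE (PA F V) (Rng \<sigma>)"
          then obtain w where w: "w \<in> W \<sigma> V" "restrict w (PA F V) = g" using W_extend[OF sig _ paF] by blast
          show "Fn F V g = c" using E2[OF VF w(1)] c w by simp
        qed
        then have "V \<in> Cn \<sigma> F" using VF by (intro Cn_I) auto
        then show False using VF by blast
      qed
    qed
    have sub2: "En G - Cn \<sigma> G \<subseteq> En F - Cn \<sigma> F"
    proof
      fix V assume VG: "V \<in> En G - Cn \<sigma> G"
      show "V \<in> En F - Cn \<sigma> F"
      proof (rule ccontr)
        assume "V \<notin> En F - Cn \<sigma> F"
        then obtain v where v: "\<forall>w\<in>W \<sigma> V. val G t V w = v" using E3 ECG VG by blast
        have pa: "PA G V \<subseteq> Dom \<sigma> - {V}" using sys_props(2)[OF G] VG by blast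
        have "\<forall>g\<in>PiE (PA G V) (Rng \<sigma>). Fn G V g = v"
        proof
          fix g assume "g \<in> PiE (PA G V) (Rng \<sigma>)"
          then obtain w where w: "w \<in> W \<sigma> V" "restrict w (PA G V) = g" using W_extend[OF sig _ pa] by blast
          show "Fn G V g = v" using v w VG unfolding val_def by auto
        qed
        then have "V \<in> Cn \<sigma> G" using VG by (intro Cn_I) auto
        then show False using VG by blast
      qed
    qed
    have "sys_sim \<sigma> G F"
      unfolding sys_sim_def
    proof (intro conjI ballI)
      show "En G - Cn \<sigma> G = En F - Cn \<sigma> F" using sub1 sub2 by blast
      fix V assume VG: "V \<in> En G - Cn \<sigma> G"
      then have VF: "V \<in> En F - Cn \<sigma> F" using sub2 by blast
      have pa: "PA G V \<union> PA F V \<subseteq> Dom \<sigma> - {V}" using sys_props(2)[OF G] sys_props(2)[OF F] VG VF by blast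
      show "fun_sim \<sigma> G F V"
        unfolding fun_sim_def
      proof
        fix g assume "g \<in> PiE (PA G V \<union> PA F V) (Rng \<sigma>)"
        then obtain w where w: "w \<in> W \<sigma> V" "restrict w (PA G V \<union> PA F V) = g"
          using W_extend[OF sig _ pa] by blast
        have "Fn G V (restrict w (PA G V)) = Fn F V (restrict w (PA F V))"
          using E2[OF VF w(1)] VG unfolding val_def by simp
        moreover have "restrict g (PA G V) = restrict w (PA G V)"
          using w(2) rr[of "PA G V" "PA G V \<union> PA F V" w] by auto
        moreover have "restrict g (PA F V) = restrict w (PA F V)"
          using w(2) rr[of "PA F V" "PA G V \<union> PA F V" w] by auto
        ultimately show "Fn G V (restrict g (PA G V)) = Fn F V (restrict g (PA F V))" by simp
      qed
    qed
    then show "t = s \<and> sys_sim \<sigma> G F" using ts by blast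
  next
    assume B: "t = s \<and> sys_sim \<sigma> G F"
    have eqs: "En G - Cn \<sigma> G = En F - Cn \<sigma> F" using B unfolding sys_sim_def by blast
    have P2: "val G t V w = Fn F V (restrict w (PA F V))" if VF: "V \<in> En F - Cn \<sigma> F" and w: "w \<in> W \<sigma> V" for V w
    proof -
      have VG: "V \<in> En G - Cn \<sigma> G" using eqs VF by blast
      have fs: "fun_sim \<sigma> G F V" using B VG unfolding sys_sim_def by blast
      have pa: "PA G V \<union> PA F V \<subseteq> Dom \<sigma> - {V}" using sys_props(2)[OF G] sys_props(2)[OF F] VG VF by blast
      show ?thesis using fs[unfolded fun_sim_def, rule_format, OF W_restrict[OF w pa]] VG
        unfolding val_def by (simp add: rr)
    qed
    have P3: "\<exists>v\<in>Rng \<sigma> V. t V = v \<and> (\<forall>w\<in>W \<sigma> V. val G t V w = v)"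
      if V: "V \<in> Dom \<sigma> - (En F - Cn \<sigma> F)" for V
    proof -
      have tV: "t V \<in> Rng \<sigma> V" using t V unfolding assignments_def by (auto simp: PiE_mem)
      have "val G t V w = t V" if w: "w \<in> W \<sigma> V" for w
      proof (cases "V \<in> En G")
        case False then show ?thesis unfolding val_def by simp
      next
        case True
        then have cn: "V \<in> Cn \<sigma> G" using V eqs by blast
        have pa: "PA G V \<subseteq> Dom \<sigma> - {V}" using sys_props(2)[OF G True] .
        have "Fn G V (restrict w (PA G V)) = Fn G V (restrict t (PA G V))"
          by (rule Cn_const[OF cn W_restrict[OF w pa] assign_restrict[OF t G True]])
        also have "\<dots> = t V" by (rule compatD[OF cG True, symmetric])
        finally show ?thesis using True unfolding val_def by simp
      qed
      then show ?thesis using tV by blast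
    qed
    show "(\<forall>X\<in>Dom \<sigma>. t X = s X) \<and>
     (\<forall>V\<in>En F - Cn \<sigma> F. \<forall>w\<in>W \<sigma> V. val G t V w = Fn F V (restrict w (PA F V))) \<and>
     (\<forall>V\<in>Dom \<sigma> - (En F - Cn \<sigma> F). \<exists>v\<in>Rng \<sigma> V. t V = v \<and> (\<forall>w\<in>W \<sigma> V. val G t V w = v))"
      using B P2 P3 by blast
  qed
  finally show ?thesis .
qed

lemma wf_chi:
  assumes sig: "wf_sig \<sigma>" and s: "s \<in> assignments \<sigma>" and F: "F \<in> systems \<sigma>"
  shows "wf_form \<sigma> (chi \<sigma> s F)"
proof -
  have b: "wf_form \<sigma> (botf \<sigma>)" by (rule wf_bot[OF sig])
  have sX: "s X \<in> Rng \<sigma> X" if "X \<in> Dom \<sigma>" for X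
    using PiE_mem[OF s[unfolded assignments_def] that] .
  have 1: "wf_form \<sigma> (bconj (botf \<sigma>) (map (\<lambda>X. Eq X (s X)) (enumL (Dom \<sigma>))))"
    by (rule wf_bconj[OF b]) (simp add: set_enum[OF finDom[OF sig]] sX)
  have 2: "wf_form \<sigma> (eta \<sigma> F V)" if VF: "V \<in> En F - Cn \<sigma> F" for V
  proof -
    have pa: "PA F V \<subseteq> Dom \<sigma> - {V}" using sys_props(2)[OF F] VF by blast
    have VE: "V \<in> En F" using VF by blast
    have fr: "Fn F V (restrict w (PA F V)) \<in> Rng \<sigma> V" if w: "w \<in> W \<sigma> V" for w
      using PiE_mem[OF sys_props(3)[OF F VE] W_restrict[OF w pa]] .
    have VD: "V \<in> Dom \<sigma>" using VE sys_props(1)[OF F] by blast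
    have "wf_form \<sigma> (cf (wl \<sigma> V w) (Eq V (Fn F V (restrict w (PA F V)))))" if w: "w \<in> W \<sigma> V" for w
      by (rule wf_cf[OF sig w]) (simp add: fr[OF w] VD)
    then show ?thesis unfolding eta_def
      by (intro wf_bconj[OF b]) (simp add: set_enum[OF finW[OF sig]])
  qed
  have 3: "wf_form \<sigma> (xi \<sigma> V)" if V: "V \<in> Dom \<sigma>" for V
  proof -
    have "wf_form \<sigma> (cf (wl \<sigma> V w) (Eq V v))" if w: "w \<in> W \<sigma> V" and v: "v \<in> Rng \<sigma> V" for w v
      by (rule wf_cf[OF sig w]) (simp add: v V)
    then have "wf_form \<sigma> (Conj (Eq V v) (bconj (botf \<sigma>) (map (\<lambda>w. cf (wl \<sigma> V w) (Eq V v)) (enumL (W \<sigma> V)))))"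
      if v: "v \<in> Rng \<sigma> V" for v
      using v V by (simp add: wf_bconj[OF b] set_enum[OF finW[OF sig]])
    then show ?thesis unfolding xi_def
      by (intro wf_bdisj[OF b]) (simp add: set_enum[OF finRng[OF sig V]])
  qed
  have 4: "wf_form \<sigma> (bconj (botf \<sigma>) (map (eta \<sigma> F) (enumL (En F - Cn \<sigma> F))))"
    by (rule wf_bconj[OF b]) (simp add: set_enum[OF finEC[OF sig F]] 2)
  have 5: "wf_form \<sigma> (bconj (botf \<sigma>) (map (xi \<sigma>) (enumL (Dom \<sigma> - (En F - Cn \<sigma> F)))))"
    by (rule wf_bconj[OF b]) (simp add: set_enum[OF finite_Diff[OF finDom[OF sig]]] 3)
  show ?thesis unfolding chi_def using 1 4 5 by simp
qed

lemma finite_systems: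
  fixes \<sigma> :: "('v, 'a) signature"
  assumes sig: "wf_sig \<sigma>"
  shows "finite (systems \<sigma>)"
proof -
  let ?D = "Dom \<sigma>"
  define f where "f = (\<lambda>F::('v,'a) sysf. (En F, restrict (PA F) ?D, restrict (Fn F) ?D))"
  let ?R = "Pow ?D \<times> PiE ?D (\<lambda>_. Pow ?D) \<times>
     PiE ?D (\<lambda>V. insert (\<lambda>_. undefined) (\<Union>P\<in>Pow ?D. PiE (PiE P (Rng \<sigma>)) (\<lambda>_. Rng \<sigma> V)))"
  have fD: "finite ?D" by (rule finDom[OF sig])
  have fR: "finite ?R"
  proof (intro finite_cartesian_product finite_PiE)
    show "finite (Pow ?D)" using fD by simp
    show "finite ?D" by (rule fD)
    show "finite ?D" by (rule fD)
    fix V assume V: "V \<in> ?D"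
    show "finite (Pow ?D)" using fD by simp
    show "finite (insert (\<lambda>_. undefined) (\<Union>P\<in>Pow ?D. PiE (PiE P (Rng \<sigma>)) (\<lambda>_. Rng \<sigma> V)))"
    proof (intro finite_insert[THEN iffD2] finite_UN_I)
      show "finite (Pow ?D)" using fD by simp
      fix P assume P: "P \<in> Pow ?D"
      have fP: "finite (PiE P (Rng \<sigma>))"
        using P fD finRng[OF sig] by (intro finite_PiE) (auto intro: finite_subset)
      show "finite (PiE (PiE P (Rng \<sigma>)) (\<lambda>_. Rng \<sigma> V))"
        by (rule finite_PiE[OF fP]) (rule finRng[OF sig V])
    qed
  qed
  have sub: "f ` systems \<sigma> \<subseteq> ?R"
  proof
    fix y assume "y \<in> f ` systems \<sigma>"
    then obtain F where F: "F \<in> systems \<sigma>" and y: "y = f F" by blast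
    have 1: "En F \<in> Pow ?D" using sys_props(1)[OF F] by blast
    have 2: "restrict (PA F) ?D \<in> PiE ?D (\<lambda>_. Pow ?D)"
    proof (rule restrict_PiE_iff[THEN iffD2], intro ballI)
      fix V assume "V \<in> ?D"
      show "PA F V \<in> Pow ?D" by (cases "V \<in> En F") (use sys_props(2,4)[OF F] in auto)
    qed
    have 3: "restrict (Fn F) ?D \<in> PiE ?D (\<lambda>V. insert (\<lambda>_. undefined) (\<Union>P\<in>Pow ?D. PiE (PiE P (Rng \<sigma>)) (\<lambda>_. Rng \<sigma> V)))"
    proof (rule restrict_PiE_iff[THEN iffD2], intro ballI)
      fix V assume "V \<in> ?D"
      show "Fn F V \<in> insert (\<lambda>_. undefined) (\<Union>P\<in>Pow ?D. PiE (PiE P (Rng \<sigma>)) (\<lambda>_. Rng \<sigma> V))"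
      proof (cases "V \<in> En F")
        case True
        have "PA F V \<in> Pow ?D" using sys_props(2)[OF F True] by blast
        then show ?thesis using sys_props(3)[OF F True] by blast
      next
        case False
        then show ?thesis using sys_props(5)[OF F] by simp
      qed
    qed
    show "y \<in> ?R" unfolding y f_def using 1 2 3 by blast
  qed
  have inj: "inj_on f (systems \<sigma>)"
  proof
    fix F G assume F: "F \<in> systems \<sigma>" and G: "G \<in> systems \<sigma>" and e: "f F = f G"
    have En: "En F = En G" using e unfolding f_def by simp
    have PA: "PA F = PA G"
    proof
      fix V show "PA F V = PA G V"
      proof (cases "V \<in> ?D")
        case True
        then show ?thesis using e unfolding f_def by (metis prod.inject restrict_apply')
      next
        case False
        then have "V \<notin> En F" "V \<notin> En G" using sys_props(1)[OF F] sys_props(1)[OF G] by blast+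
        then show ?thesis using sys_props(4)[OF F] sys_props(4)[OF G] by simp
      qed
    qed
    have Fn: "Fn F = Fn G"
    proof
      fix V show "Fn F V = Fn G V"
      proof (cases "V \<in> ?D")
        case True
        then show ?thesis using e unfolding f_def by (metis prod.inject restrict_apply')
      next
        case False
        then have "V \<notin> En F" "V \<notin> En G" using sys_props(1)[OF F] sys_props(1)[OF G] by blast+
        then show ?thesis using sys_props(5)[OF F] sys_props(5)[OF G] by simp
      qed
    qed
    show "F = G" using En PA Fn by (intro sysf.equality) auto
  qed
  show ?thesis using finite_subset[OF sub fR] inj by (rule finite_imageD)
qed

lemma finite_Sset: "wf_sig \<sigma> \<Longrightarrow> finite (Sset \<sigma>)"
proof -
  assume sig: "wf_sig \<sigma>"
  have "Sset \<sigma> \<subseteq> assignments \<sigma> \<times> systems \<sigma>" unfolding Sset_def by auto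
  moreover have "finite (assignments \<sigma>)" unfolding assignments_def
    using finDom[OF sig] finRng[OF sig] by (intro finite_PiE) auto
  ultimately show ?thesis using finite_systems[OF sig] by (meson finite_SigmaI finite_subset)
qed

lemma ct_mem: "(T, F) \<in> cteams \<sigma> \<Longrightarrow> s \<in> T \<Longrightarrow> F \<in> systems \<sigma> \<and> s \<in> assignments \<sigma> \<and> compatible s F"
  unfolding cteams_def by auto

lemma ct_single: "(T, F) \<in> cteams \<sigma> \<Longrightarrow> s \<in> T \<Longrightarrow> ({s}, F) \<in> cteams \<sigma>"
  unfolding cteams_def by auto

lemma ct_single_iff: "({s}, F) \<in> cteams \<sigma> \<longleftrightarrow> F \<in> systems \<sigma> \<and> s \<in> assignments \<sigma> \<and> compatible s F"
  unfolding cteams_def by auto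

lemma Sset_iff: "(s, F) \<in> Sset \<sigma> \<longleftrightarrow> F \<in> systems \<sigma> \<and> s \<in> assignments \<sigma> \<and> compatible s F"
  unfolding Sset_def by auto

definition Phi :: "('v, 'a) signature \<Rightarrow> (('v \<Rightarrow> 'a) \<times> ('v, 'a) sysf) set \<Rightarrow> ('v, 'a) CO" where
  "Phi \<sigma> P = bdisj (botf \<sigma>) (map (\<lambda>(s, F). chi \<sigma> s F) (enumL P))"

lemma Phi_props:
  assumes sig: "wf_sig \<sigma>" and P: "P \<subseteq> Sset \<sigma>"
  shows "wf_form \<sigma> (Phi \<sigma> P)"
    and "\<And>t G. G \<in> systems \<sigma> \<Longrightarrow> t \<in> assignments \<sigma> \<Longrightarrow> compatible t G \<Longrightarrow>
       pt t G (Phi \<sigma> P) \<longleftrightarrow> (\<exists>F. (t, F) \<in> P \<and> sys_sim \<sigma> G F)"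
proof -
  have fP: "finite P" using finite_subset[OF P finite_Sset[OF sig]] .
  have sP: "set (enumL P) = P" by (rule set_enum[OF fP])
  show "wf_form \<sigma> (Phi \<sigma> P)" unfolding Phi_def
  proof (rule wf_bdisj[OF wf_bot[OF sig]])
    show "\<forall>a\<in>set (map (\<lambda>(s, F). chi \<sigma> s F) (enumL P)). wf_form \<sigma> a"
      unfolding set_map sP using P wf_chi[OF sig] by (auto simp: Sset_iff)
  qed
  fix t G assume G: "G \<in> systems \<sigma>" and t: "t \<in> assignments \<sigma>" and c: "compatible t G"
  have "pt t G (Phi \<sigma> P) \<longleftrightarrow> (\<exists>(s, F)\<in>P. pt t G (chi \<sigma> s F))"
    unfolding Phi_def pt_bdisj_bot set_map sP by fastforce
  also have "\<dots> \<longleftrightarrow> (\<exists>(s, F)\<in>P. t = s \<and> sys_sim \<sigma> G F)"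
  proof -
    have "pt t G (chi \<sigma> s F) \<longleftrightarrow> t = s \<and> sys_sim \<sigma> G F" if "(s, F) \<in> P" for s F
      using that P chi_lemma[OF sig G t c] by (auto simp: Sset_iff)
    then show ?thesis by blast
  qed
  finally show "pt t G (Phi \<sigma> P) \<longleftrightarrow> (\<exists>F. (t, F) \<in> P \<and> sys_sim \<sigma> G F)" by blast
qed

theorem theorem4p4:
  fixes \<sigma> :: "('v, 'a) signature"
  assumes "wf_sig \<sigma>"
  shows "(\<forall>K. K \<subseteq> cteams \<sigma> \<and> K \<noteq> {} \<longrightarrow>
            ((\<exists>\<phi>. wf_form \<sigma> \<phi> \<and> K = {T\<in>cteams \<sigma>. sat_c T \<phi>}) \<longleftrightarrow>
             flat_c \<sigma> K \<and> closed_equiv_c \<sigma> K)) \<and>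
         (\<forall>K. K \<subseteq> gteams \<sigma> \<and> K \<noteq> {} \<longrightarrow>
            ((\<exists>\<phi>. wf_form \<sigma> \<phi> \<and> K = {T\<in>gteams \<sigma>. sat_g T \<phi>}) \<longleftrightarrow>
             flat_g \<sigma> K \<and> closed_equiv_g \<sigma> K))"
proof (intro conjI allI impI)
  note sig = assms
  fix K :: "('v, 'a) cteam set" assume "K \<subseteq> cteams \<sigma> \<and> K \<noteq> {}"
  then have Ksub: "K \<subseteq> cteams \<sigma>" by blast
  show "(\<exists>\<phi>. wf_form \<sigma> \<phi> \<and> K = {T\<in>cteams \<sigma>. sat_c T \<phi>}) \<longleftrightarrow> flat_c \<sigma> K \<and> closed_equiv_c \<sigma> K"
  proof
    assume "\<exists>\<phi>. wf_form \<sigma> \<phi> \<and> K = {T\<in>cteams \<sigma>. sat_c T \<phi>}"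
    then obtain \<phi> where wf: "wf_form \<sigma> \<phi>" and K: "K = {T\<in>cteams \<sigma>. \<forall>s\<in>fst T. pt s (snd T) \<phi>}"
      unfolding sat_c_pt by blast
    have "flat_c \<sigma> K" unfolding flat_c_def K using ct_single by fastforce
    moreover have "closed_equiv_c \<sigma> K"
      unfolding closed_equiv_c_def
    proof (intro allI impI)
      fix T S assume A: "T \<in> K \<and> S \<in> cteams \<sigma> \<and> ct_equiv \<sigma> T S"
      obtain TT F where T: "T = (TT, F)" by force
      obtain SS G where S: "S = (SS, G)" by force
      have eq: "SS = TT" and sim: "sys_sim \<sigma> F G" using A T S unfolding ct_equiv_def by auto
      have Tc: "(TT, F) \<in> cteams \<sigma>" and Sc: "(SS, G) \<in> cteams \<sigma>" using A K T S by auto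
      have "\<forall>s\<in>TT. pt s F \<phi>" using A K T by auto
      moreover have "pt s F \<phi> = pt s G \<phi>" if "s \<in> TT" for s
        using ct_mem[OF Tc that] ct_mem[OF Sc, of s] that eq pt_sim[OF sig _ _ _ _ _ sim wf] by blast
      ultimately show "S \<in> K" using K S Sc eq by auto
    qed
    ultimately show "flat_c \<sigma> K \<and> closed_equiv_c \<sigma> K" by blast
  next
    assume A: "flat_c \<sigma> K \<and> closed_equiv_c \<sigma> K"
    define P where "P = {(s, F). ({s}, F) \<in> K}"
    have P: "P \<subseteq> Sset \<sigma>" unfolding P_def using Ksub by (auto simp: Sset_iff ct_single_iff)
    have key: "({t}, G) \<in> K \<longleftrightarrow> (\<exists>F. (t, F) \<in> P \<and> sys_sim \<sigma> G F)" if tG: "({t}, G) \<in> cteams \<sigma>" for t G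
    proof
      assume "({t}, G) \<in> K" then show "\<exists>F. (t, F) \<in> P \<and> sys_sim \<sigma> G F" unfolding P_def using sim_refl by blast
    next
      assume "\<exists>F. (t, F) \<in> P \<and> sys_sim \<sigma> G F"
      then obtain F where F: "({t}, F) \<in> K" and sim: "sys_sim \<sigma> G F" unfolding P_def by blast
      have "ct_equiv \<sigma> ({t}, F) ({t}, G)" unfolding ct_equiv_def using sim_sym[OF sim] by simp
      then show "({t}, G) \<in> K" using A F tG unfolding closed_equiv_c_def by blast
    qed
    have "K = {T\<in>cteams \<sigma>. sat_c T (Phi \<sigma> P)}"
    proof (intro set_eqI iffI)
      fix T assume T: "T \<in> K"
      obtain TT G where TG: "T = (TT, G)" by force
      have Tc: "(TT, G) \<in> cteams \<sigma>" using T TG Ksub by auto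
      have "\<forall>t\<in>TT. ({t}, G) \<in> K" using A T TG Tc unfolding flat_c_def by blast
      then have "\<forall>t\<in>TT. pt t G (Phi \<sigma> P)"
        using key ct_single[OF Tc] Phi_props(2)[OF sig P] ct_mem[OF Tc] by blast
      then show "T \<in> {T\<in>cteams \<sigma>. sat_c T (Phi \<sigma> P)}" using TG Tc by (simp add: sat_c_pt)
    next
      fix T assume T: "T \<in> {T\<in>cteams \<sigma>. sat_c T (Phi \<sigma> P)}"
      obtain TT G where TG: "T = (TT, G)" by force
      have Tc: "(TT, G) \<in> cteams \<sigma>" using T TG by auto
      have "\<forall>t\<in>TT. pt t G (Phi \<sigma> P)" using T TG by (simp add: sat_c_pt)
      then have "\<forall>t\<in>TT. ({t}, G) \<in> K"
        using key ct_single[OF Tc] Phi_props(2)[OF sig P] ct_mem[OF Tc] by blast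
      then show "T \<in> K" using A TG Tc unfolding flat_c_def by blast
    qed
    then show "\<exists>\<phi>. wf_form \<sigma> \<phi> \<and> K = {T\<in>cteams \<sigma>. sat_c T \<phi>}"
      using Phi_props(1)[OF sig P] by blast
  qed
next
  note sig = assms
  fix K :: "('v, 'a) gteam set" assume "K \<subseteq> gteams \<sigma> \<and> K \<noteq> {}"
  then have Ksub: "K \<subseteq> gteams \<sigma>" by blast
  show "(\<exists>\<phi>. wf_form \<sigma> \<phi> \<and> K = {T\<in>gteams \<sigma>. sat_g T \<phi>}) \<longleftrightarrow> flat_g \<sigma> K \<and> closed_equiv_g \<sigma> K"
  proof
    assume "\<exists>\<phi>. wf_form \<sigma> \<phi> \<and> K = {T\<in>gteams \<sigma>. sat_g T \<phi>}"
    then obtain \<phi> where wf: "wf_form \<sigma> \<phi>" and K: "K = {T\<in>gteams \<sigma>. \<forall>(s, F)\<in>T. pt s F \<phi>}"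
      unfolding sat_g_pt by blast
    have "flat_g \<sigma> K" unfolding flat_g_def K gteams_def by auto
    moreover have "closed_equiv_g \<sigma> K"
      unfolding closed_equiv_g_def
    proof (intro allI impI)
      fix T S assume A: "T \<in> K \<and> S \<in> gteams \<sigma> \<and> gt_equiv \<sigma> T S"
      have TS: "T \<subseteq> Sset \<sigma>" "S \<subseteq> Sset \<sigma>" using A K unfolding gteams_def by auto
      have "pt s G \<phi>" if sG: "(s, G) \<in> S" for s G
      proof -
        have G: "G \<in> systems \<sigma>" and s: "s \<in> assignments \<sigma>" and cG: "compatible s G"
          using TS sG by (auto simp: Sset_iff)
        have "s \<in> fst ` gt_restrict \<sigma> S G" using sG sim_refl unfolding gt_restrict_def by force
        also have "\<dots> = fst ` gt_restrict \<sigma> T G" using A G unfolding gt_equiv_def by simp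
        finally obtain F where sF: "(s, F) \<in> T" and sim: "sys_sim \<sigma> F G" unfolding gt_restrict_def by auto
        have F: "F \<in> systems \<sigma>" and cF: "compatible s F" using TS sF by (auto simp: Sset_iff)
        have "pt s F \<phi>" using A K sF by auto
        then show ?thesis using pt_sim[OF sig F G s cF cG sim wf] by simp
      qed
      then show "S \<in> K" using A K by auto
    qed
    ultimately show "flat_g \<sigma> K \<and> closed_equiv_g \<sigma> K" by blast
  next
    assume A: "flat_g \<sigma> K \<and> closed_equiv_g \<sigma> K"
    define P where "P = {p. {p} \<in> K}"
    have P: "P \<subseteq> Sset \<sigma>" unfolding P_def using Ksub by (auto simp: gteams_def)
    have key: "{(t, G)} \<in> K \<longleftrightarrow> (\<exists>F. (t, F) \<in> P \<and> sys_sim \<sigma> G F)" if tG: "(t, G) \<in> Sset \<sigma>" for t G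
    proof
      assume "{(t, G)} \<in> K" then show "\<exists>F. (t, F) \<in> P \<and> sys_sim \<sigma> G F" unfolding P_def using sim_refl by blast
    next
      assume "\<exists>F. (t, F) \<in> P \<and> sys_sim \<sigma> G F"
      then obtain F where F: "{(t, F)} \<in> K" and sim: "sys_sim \<sigma> G F" unfolding P_def by blast
      have Fs: "F \<in> systems \<sigma>" using F Ksub by (auto simp: gteams_def Sset_iff)
      have Gs: "G \<in> systems \<sigma>" using tG by (auto simp: Sset_iff)
      have "gt_equiv \<sigma> {(t, F)} {(t, G)}"
        unfolding gt_equiv_def
      proof
        fix H assume H: "H \<in> systems \<sigma>"
        have "sys_sim \<sigma> F H \<longleftrightarrow> sys_sim \<sigma> G H"
          using sim_trans[OF sig Fs Gs H sim_sym[OF sim]] sim_trans[OF sig Gs Fs H sim] by blast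
        then show "fst ` gt_restrict \<sigma> {(t, F)} H = fst ` gt_restrict \<sigma> {(t, G)} H"
          unfolding gt_restrict_def by auto
      qed
      moreover have "{(t, G)} \<in> gteams \<sigma>" using tG unfolding gteams_def by auto
      ultimately show "{(t, G)} \<in> K" using A F unfolding closed_equiv_g_def by blast
    qed
    have pts: "(\<forall>(t, G)\<in>T. pt t G (Phi \<sigma> P)) \<longleftrightarrow> (\<forall>p\<in>T. {p} \<in> K)" if T: "T \<subseteq> Sset \<sigma>" for T
    proof -
      have "pt t G (Phi \<sigma> P) \<longleftrightarrow> {(t, G)} \<in> K" if "(t, G) \<in> T" for t G
        using that T key[of t G] Phi_props(2)[OF sig P, of G t] by (auto simp: Sset_iff)
      then show ?thesis by auto
    qed
    have "K = {T\<in>gteams \<sigma>. sat_g T (Phi \<sigma> P)}"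
    proof (intro set_eqI iffI)
      fix T assume T: "T \<in> K"
      then have Tg: "T \<in> gteams \<sigma>" using Ksub by auto
      then have "\<forall>p\<in>T. {p} \<in> K" using A T unfolding flat_g_def by blast
      then show "T \<in> {T\<in>gteams \<sigma>. sat_g T (Phi \<sigma> P)}"
        using pts[of T] Tg unfolding sat_g_pt gteams_def by auto
    next
      fix T assume T: "T \<in> {T\<in>gteams \<sigma>. sat_g T (Phi \<sigma> P)}"
      then have "\<forall>p\<in>T. {p} \<in> K" using pts[of T] unfolding sat_g_pt gteams_def by auto
      then show "T \<in> K" using A T unfolding flat_g_def by blast
    qed
    then show "\<exists>\<phi>. wf_form \<sigma> \<phi> \<and> K = {T\<in>gteams \<sigma>. sat_g T \<phi>}"
      using Phi_props(1)[OF sig P] by blast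
  qed
qed

end
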